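(* Let $k$ be an algebraically closed field of characteristic $0$, $d\ge3$, $n\ge1$, and let $V_n$ have basis $v_1,\dots,v_n$ with symmetric $d$-linear form $\Theta_d(v_{i_1},\dots,v_{i_d})=1$ if $i_1+\dots+i_d=(d-1)n+1$ and $0$ otherwise. Let $\mathcal{L}(n,d)=\{L\in\mathfrak{gl}(V_n):\sum_{i=1}^d\Theta_d(u_1,\dots,L(u_i),\dots,u_d)=0\ \forall u_j\}$. Then every element of $\mathcal{L}(n,d)$ is upper triangular with respect to the basis $v_1,\dots,v_n$ (i.e. maps $v_i$ into $\mathrm{span}\{v_1,\dots,v_i\}$); hence $\mathcal{L}(n,d)$ is solvable. *)

theory Defs
  imports "HOL-Computational_Algebra.Polynomial" "HOL-Library.FuncSet"
begin

text \<open>Vectors of V_n are coordinate functions nat => 'a (coordinates 1..n);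
 endomorphisms of V_n are matrices nat => nat => 'a with entries indexed by {1..n},
 where L v_j = sum_i L i j v_i.\<close>

type_synonym 'a mat = "nat \<Rightarrow> nat \<Rightarrow> 'a"

definition mat_apply :: "nat \<Rightarrow> 'a::field mat \<Rightarrow> (nat \<Rightarrow> 'a) \<Rightarrow> (nat \<Rightarrow> 'a)" where
  "mat_apply n L u = (\<lambda>i. \<Sum>l=1..n. L i l * u l)"

definition Theta :: "nat \<Rightarrow> nat \<Rightarrow> (nat \<Rightarrow> nat \<Rightarrow> 'a::field) \<Rightarrow> 'a" where
  "Theta n d u = (\<Sum>\<iota>\<in>PiE {0..<d} (\<lambda>_. {1..n}).
      if (\<Sum>j<d. \<iota> j) = (d - 1) * n + 1 then (\<Prod>j<d. u j (\<iota> j)) else 0)"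

definition Lnd :: "nat \<Rightarrow> nat \<Rightarrow> 'a::field mat set" where
  "Lnd n d = {L. (\<forall>i j. (i \<notin> {1..n} \<or> j \<notin> {1..n}) \<longrightarrow> L i j = 0) \<and>
      (\<forall>u :: nat \<Rightarrow> nat \<Rightarrow> 'a. (\<Sum>i<d. Theta n d (u(i := mat_apply n L (u i)))) = 0)}"

definition upper_triangular :: "nat \<Rightarrow> 'a::field mat \<Rightarrow> bool" where
  "upper_triangular n L \<longleftrightarrow> (\<forall>i j. 1 \<le> j \<and> j < i \<and> i \<le> n \<longrightarrow> L i j = 0)"

definition mat_mult :: "nat \<Rightarrow> 'a::field mat \<Rightarrow> 'a mat \<Rightarrow> 'a mat" where
  "mat_mult n A B = (\<lambda>i j. \<Sum>l=1..n. A i l * B l j)"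

definition bracket :: "nat \<Rightarrow> 'a::field mat \<Rightarrow> 'a mat \<Rightarrow> 'a mat" where
  "bracket n A B = (\<lambda>i j. mat_mult n A B i j - mat_mult n B A i j)"

inductive_set derived_step :: "nat \<Rightarrow> 'a::field mat set \<Rightarrow> 'a mat set" for n S where
  br: "A \<in> S \<Longrightarrow> B \<in> S \<Longrightarrow> bracket n A B \<in> derived_step n S"
| zero: "(\<lambda>i j. 0) \<in> derived_step n S"
| add: "X \<in> derived_step n S \<Longrightarrow> Y \<in> derived_step n S \<Longrightarrow> (\<lambda>i j. X i j + Y i j) \<in> derived_step n S"
| smult: "X \<in> derived_step n S \<Longrightarrow> (\<lambda>i j. c * X i j) \<in> derived_step n S"

definition derived_series :: "nat \<Rightarrow> 'a::field mat set \<Rightarrow> nat \<Rightarrow> 'a mat set" where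
  "derived_series n S m = (derived_step n ^^ m) S"

definition solvable_lie :: "nat \<Rightarrow> 'a::field mat set \<Rightarrow> bool" where
  "solvable_lie n S \<longleftrightarrow> (\<exists>m. derived_series n S m \<subseteq> {\<lambda>i j. 0})"

end

theory Submission
  imports Defs
begin


lemma comb:
  fixes f :: "nat \<Rightarrow> 'a::field_char_0"
  assumes n1: "n \<ge> 1" and mn: "m < n"
    and fz: "\<And>x. m < x \<Longrightarrow> x \<le> n \<Longrightarrow> f x = 0"
    and tri: "\<And>a b c. 1 \<le> a \<Longrightarrow> a \<le> n \<Longrightarrow> 1 \<le> b \<Longrightarrow> b \<le> n \<Longrightarrow> 1 \<le> c \<Longrightarrow> c \<le> n
       \<Longrightarrow> a + b + c = n + m + 1 \<Longrightarrow> f a + f b + f c = 0"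
    and x1: "1 \<le> x" and xn: "x \<le> n"
  shows "f x = 0"
proof (cases "m < x")
  case True then show ?thesis using fz xn by auto
next
  case False
  hence xm: "x \<le> m" by simp
  have n2: "n \<ge> 2" using xm x1 mn by simp
  have D: "f (y+1) = f y - f (n-1)" if "1 \<le> y" "y \<le> m" for y
  proof -
    have e1: "f y + f n + f (m+1-y) = 0" using tri[of y n "m+1-y"] that mn by simp
    have e2: "f (y+1) + f (n-1) + f (m+1-y) = 0" using tri[of "y+1" "n-1" "m+1-y"] that mn n2 by simp
    have "f n = 0" using fz mn by simp
    have "f (y+1) - (f y - f (n-1)) = (f (y+1) + f (n-1) + f (m+1-y)) - (f y + f n + f (m+1-y))"
      using \<open>f n = 0\<close> by (simp add: algebra_simps)
    also have "\<dots> = 0" using e1 e2 by simp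
    finally show ?thesis by simp
  qed
  show ?thesis
  proof (cases "m < n - 1")
    case True
    have fn1: "f (n-1) = 0" using fz True by simp
    have "\<forall>k. k \<le> m \<longrightarrow> f (m+1-k) = 0"
    proof (intro allI)
      fix k show "k \<le> m \<longrightarrow> f (m+1-k) = 0"
      proof (induction k)
        case 0 then show ?case using fz mn by simp
      next
        case (Suc k)
        show ?case
        proof
          assume "Suc k \<le> m"
          hence "f (m - k + 1) = f (m-k) - f (n-1)" using D[of "m-k"] by simp
          moreover have "m - k + 1 = m + 1 - k" "m + 1 - Suc k = m - k" using \<open>Suc k \<le> m\<close> by auto
          ultimately show "f (m+1 - Suc k) = 0" using Suc fn1 \<open>Suc k \<le> m\<close> by simp
        qed
      qed
    qed
    moreover have "m+1-x \<le> m" using x1 by simp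
    ultimately have "f (m+1-(m+1-x)) = 0" by blast
    moreover have "m+1-(m+1-x) = x" using xm by simp
    ultimately show ?thesis by simp
  next
    case False
    hence mq: "m = n - 1" using mn by simp
    define \<delta> where "\<delta> = f (n-1)"
    have lin: "\<forall>k. k < n \<longrightarrow> f (Suc k) = f 1 - of_nat k * \<delta>"
    proof (intro allI)
      fix k show "k < n \<longrightarrow> f (Suc k) = f 1 - of_nat k * \<delta>"
      proof (induction k)
        case 0 then show ?case by simp
      next
        case (Suc k)
        show ?case
        proof
          assume "Suc k < n"
          hence "f (Suc k + 1) = f (Suc k) - \<delta>" using D[of "Suc k"] mq \<delta>_def by simp
          then show "f (Suc (Suc k)) = f 1 - of_nat (Suc k) * \<delta>" using Suc \<open>Suc k < n\<close>
            by (simp add: algebra_simps)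
        qed
      qed
    qed
    have "f n = 0" using fz mn by simp
    hence a: "f 1 = of_nat (n-1) * \<delta>" using lin[rule_format, of "n-1"] n1 by simp
    have "f 1 + f (n-1) + f n = 0" using tri[of 1 "n-1" n] n2 mq by simp
    hence "of_nat (n-1) * \<delta> + \<delta> = 0" using a \<open>f n = 0\<close> \<delta>_def by simp
    hence "of_nat n * \<delta> = 0" using n1 by (simp add: algebra_simps of_nat_diff)
    hence d0: "\<delta> = 0" using n1 by simp
    have "f x = f 1 - of_nat (x-1) * \<delta>" using lin[rule_format, of "x-1"] x1 xn by simp
    then show ?thesis using a d0 by simp
  qed
qed



definition bvec :: "nat \<Rightarrow> nat \<Rightarrow> 'a::field" where "bvec j = (\<lambda>i. if i = j then 1 else 0)"

lemma theta_basis: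
  fixes w :: "nat \<Rightarrow> 'a::field"
  assumes k0: "k0 < d" and t: "\<And>k. k < d \<Longrightarrow> t k \<in> {1..n}"
  shows "Theta n d ((\<lambda>k. bvec (t k))(k0 := w)) =
     (\<Sum>l=1..n. if (\<Sum>j<d. (t(k0:=l)) j) = (d-1)*n+1 then w l else 0)"
proof -
  define u where "u = (\<lambda>k. bvec (t k))(k0 := w)"
  define h where "h = (\<lambda>\<iota>. if (\<Sum>j<d. \<iota> j) = (d - 1) * n + 1 then (\<Prod>j<d. u j (\<iota> j)) else (0::'a))"
  define g where "g = (\<lambda>l. restrict (t(k0:=l)) {0..<d})"
  define P where "P = PiE {0..<d} (\<lambda>_. {1..n::nat})"
  have fin: "finite P" unfolding P_def by (simp add: finite_PiE)
  have sub: "g ` {1..n} \<subseteq> P" unfolding g_def P_def using t by (auto simp: PiE_iff)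
  have zero: "h \<iota> = 0" if "\<iota> \<in> P - g ` {1..n}" for \<iota>
  proof -
    have iP: "\<iota> \<in> P" and ng: "\<iota> \<notin> g ` {1..n}" using that by auto
    have "\<exists>j<d. j \<noteq> k0 \<and> \<iota> j \<noteq> t j"
    proof (rule ccontr)
      assume "\<not> ?thesis"
      hence eq: "\<And>j. j < d \<Longrightarrow> j \<noteq> k0 \<Longrightarrow> \<iota> j = t j" by auto
      have "\<iota> = g (\<iota> k0)" unfolding g_def
      proof
        fix j show "\<iota> j = restrict (t(k0 := \<iota> k0)) {0..<d} j"
          using iP eq unfolding P_def by (cases "j < d") (auto simp: PiE_iff extensional_def)
      qed
      moreover have "\<iota> k0 \<in> {1..n}" using iP k0 unfolding P_def by (auto simp: PiE_iff)
      ultimately show False using ng by blast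
    qed
    then obtain j where j: "j < d" "j \<noteq> k0" "\<iota> j \<noteq> t j" by blast
    have "(\<Prod>j<d. u j (\<iota> j)) = 0"
      by (rule prod_zero) (use j in \<open>auto simp: u_def bvec_def\<close>)
    thus ?thesis unfolding h_def by simp
  qed
  have "Theta n d u = sum h P" unfolding Theta_def h_def P_def by simp
  also have "\<dots> = sum h (g ` {1..n})"
    by (rule sum.mono_neutral_right[OF fin sub]) (use zero in auto)
  also have "\<dots> = sum (h \<circ> g) {1..n}"
  proof (rule sum.reindex)
    show "inj_on g {1..n}"
    proof
      fix x y assume "g x = g y"
      hence "g x k0 = g y k0" by simp
      thus "x = y" using k0 unfolding g_def by simp
    qed
  qed
  also have "\<dots> = (\<Sum>l=1..n. if (\<Sum>j<d. (t(k0:=l)) j) = (d-1)*n+1 then w l else 0)"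
  proof (rule sum.cong[OF refl])
    fix l assume l: "l \<in> {1..n}"
    have s: "(\<Sum>j<d. g l j) = (\<Sum>j<d. (t(k0:=l)) j)" unfolding g_def
      by (rule sum.cong) auto
    have "(\<Prod>j<d. u j (g l j)) = (\<Prod>j<d. if j = k0 then w l else 1)"
      by (rule prod.cong) (auto simp: u_def g_def bvec_def)
    also have "\<dots> = w l" using k0 by simp
    finally show "(h \<circ> g) l = (if (\<Sum>j<d. (t(k0:=l)) j) = (d-1)*n+1 then w l else 0)"
      unfolding h_def using s by simp
  qed
  finally show ?thesis unfolding u_def .
qed



lemma sum_upd_nat:
  fixes t :: "nat \<Rightarrow> nat"
  assumes "finite A" "i \<in> A"
  shows "sum (t(i:=l)) A + t i = sum t A + l"
proof -
  have "sum (t(i:=l)) A = (t(i:=l)) i + sum (t(i:=l)) (A - {i})" by (rule sum.remove[OF assms])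
  moreover have "sum (t(i:=l)) (A - {i}) = sum t (A - {i})" by (rule sum.cong) auto
  moreover have "sum t A = t i + sum t (A - {i})" using sum.remove[OF assms] by simp
  ultimately show ?thesis by simp
qed

lemma mat_apply_bvec:
  assumes "j \<in> {1..n}"
  shows "mat_apply n L (bvec j) = (\<lambda>r. L r j)"
  unfolding mat_apply_def bvec_def using assms by (auto simp: if_distrib cong: if_cong)

lemma lnd_eq:
  fixes L :: "'a::field mat"
  assumes L: "L \<in> Lnd n d" and t: "\<And>k. k < d \<Longrightarrow> t k \<in> {1..n}"
    and s: "(\<Sum>j<d. t j) + e = (d-1)*n+1"
  shows "(\<Sum>k<d. L (t k + e) (t k)) = 0"
proof -
  have rng: "\<And>i j. (i \<notin> {1..n} \<or> j \<notin> {1..n}) \<Longrightarrow> L i j = 0" using L unfolding Lnd_def by blast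
  define u :: "nat \<Rightarrow> nat \<Rightarrow> 'a" where "u = (\<lambda>k. bvec (t k))"
  have "(\<Sum>i<d. Theta n d (u(i := mat_apply n L (u i)))) = 0" using L unfolding Lnd_def by blast
  moreover have "Theta n d (u(i := mat_apply n L (u i))) = L (t i + e) (t i)" if i: "i < d" for i
  proof -
    have "Theta n d (u(i := mat_apply n L (u i))) = Theta n d (u(i := (\<lambda>r. L r (t i))))"
      unfolding u_def using mat_apply_bvec t[OF i] by metis
    also have "\<dots> = (\<Sum>l=1..n. if (\<Sum>j<d. (t(i:=l)) j) = (d-1)*n+1 then L l (t i) else 0)"
      unfolding u_def by (rule theta_basis[OF i t])
    also have "\<dots> = (\<Sum>l=1..n. if l = t i + e then L l (t i) else 0)"
    proof (rule sum.cong[OF refl])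
      fix l
      have "(\<Sum>j<d. (t(i:=l)) j) + t i = (\<Sum>j<d. t j) + l" using sum_upd_nat[of "{..<d}" i t l] i by simp
      hence "((\<Sum>j<d. (t(i:=l)) j) = (d-1)*n+1) = (l = t i + e)" using s by linarith
      thus "(if (\<Sum>j<d. (t(i:=l)) j) = (d-1)*n+1 then L l (t i) else 0) = (if l = t i + e then L l (t i) else 0)"
        by simp
    qed
    also have "\<dots> = (if t i + e \<in> {1..n} then L (t i + e) (t i) else 0)"
      by (simp add: sum.delta')
    also have "\<dots> = L (t i + e) (t i)" using rng by auto
    finally show ?thesis .
  qed
  ultimately show ?thesis by simp
qed



lemma lnd_upper:
  fixes L :: "'a::field_char_0 mat"
  assumes L: "L \<in> Lnd n d" and d3: "d \<ge> 3" and n1: "n \<ge> 1"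
  shows "upper_triangular n L"
  unfolding upper_triangular_def
proof (intro allI impI)
  fix i j :: nat assume ij: "1 \<le> j \<and> j < i \<and> i \<le> n"
  have rng: "\<And>i j. (i \<notin> {1..n} \<or> j \<notin> {1..n}) \<Longrightarrow> L i j = 0" using L unfolding Lnd_def by blast
  define e where "e = i - j"
  define m where "m = n - e"
  define f where "f = (\<lambda>x. L (x + e) x)"
  define d' where "d' = d - 3"
  have dd: "d = Suc (Suc (Suc d'))" using d3 unfolding d'_def by simp
  have e1: "e \<ge> 1" "e < n" using ij unfolding e_def by auto
  have "f j = 0"
  proof (rule comb[of n m f j])
    show "1 \<le> n" by fact
    show "m < n" using e1 unfolding m_def by simp
    show "f x = 0" if "m < x" "x \<le> n" for x
      unfolding f_def using that e1 rng unfolding m_def by simp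
    show "f a + f b + f c = 0" if abc: "1 \<le> a" "a \<le> n" "1 \<le> b" "b \<le> n" "1 \<le> c" "c \<le> n"
         "a + b + c = n + m + 1" for a b c
    proof -
      define t where "t = (\<lambda>k::nat. if k = 0 then a else if k = 1 then b else if k = 2 then c else n)"
      have tr: "t k \<in> {1..n}" if "k < d" for k using abc n1 unfolding t_def by auto
      have st: "(\<Sum>k<d. t k) = a + b + c + d' * n"
        unfolding dd sum.lessThan_Suc_shift by (simp add: t_def)
      have "(\<Sum>k<d. t k) + e = (d-1)*n+1"
        unfolding st using abc e1 unfolding m_def dd by (simp add: algebra_simps)
      hence "(\<Sum>k<d. L (t k + e) (t k)) = 0" using lnd_eq[OF L, of t e] tr by blast
      moreover have "(\<Sum>k<d. L (t k + e) (t k)) = f a + f b + f c + of_nat d' * L (n + e) n"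
        unfolding dd sum.lessThan_Suc_shift by (simp add: t_def f_def algebra_simps)
      moreover have "L (n + e) n = 0" using rng e1 by simp
      ultimately show ?thesis by simp
    qed
    show "1 \<le> j" using ij by simp
    show "j \<le> n" using ij by simp
  qed
  moreover have "j + e = i" using ij unfolding e_def by simp
  ultimately show "L i j = 0" unfolding f_def by simp
qed



definition good :: "nat \<Rightarrow> nat \<Rightarrow> 'a::field mat \<Rightarrow> bool" where
  "good n k X \<longleftrightarrow> (\<forall>i j. (i \<notin> {1..n} \<or> j \<notin> {1..n}) \<longrightarrow> X i j = 0) \<and> (\<forall>i j. j < i + k \<longrightarrow> X i j = 0)"

lemma bracket_good:
  assumes A: "good n k A" and B: "good n k B"
  shows "good n (Suc k) (bracket n A B)"
proof -
  have Ar: "\<And>i j. (i \<notin> {1..n} \<or> j \<notin> {1..n}) \<Longrightarrow> A i j = 0" and At: "\<And>i j. j < i + k \<Longrightarrow> A i j = 0"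
    using A unfolding good_def by blast+
  have Br: "\<And>i j. (i \<notin> {1..n} \<or> j \<notin> {1..n}) \<Longrightarrow> B i j = 0" and Bt: "\<And>i j. j < i + k \<Longrightarrow> B i j = 0"
    using B unfolding good_def by blast+
  have r: "bracket n A B i j = 0" if "i \<notin> {1..n} \<or> j \<notin> {1..n}" for i j
  proof -
    have "mat_mult n A B i j = 0" unfolding mat_mult_def by (rule sum.neutral) (use that Ar Br in auto)
    moreover have "mat_mult n B A i j = 0" unfolding mat_mult_def by (rule sum.neutral) (use that Ar Br in auto)
    ultimately show ?thesis unfolding bracket_def by simp
  qed
  have t: "bracket n A B i j = 0" if ij: "j < i + Suc k" for i j
  proof -
    have "A i l * B l j = B i l * A l j" for l
    proof (cases "l < i + k")
      case True then show ?thesis using At Bt by simp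
    next
      case False
      show ?thesis
      proof (cases "k = 0 \<and> j = i \<and> l = i")
        case True then show ?thesis by simp
      next
        case c: False
        have "j < l + k"
        proof (cases "k = 0")
          case True
          then show ?thesis using c False ij by auto
        next
          case False
          then show ?thesis using \<open>\<not> l < i + k\<close> ij by auto
        qed
        then show ?thesis using At Bt by simp
      qed
    qed
    hence "mat_mult n A B i j = mat_mult n B A i j" unfolding mat_mult_def by simp
    thus ?thesis unfolding bracket_def by simp
  qed
  show ?thesis unfolding good_def using r t by blast
qed

lemma derived_good:
  assumes "\<And>X. X \<in> S \<Longrightarrow> good n k X" and "Y \<in> derived_step n S"
  shows "good n (Suc k) Y"
  using assms(2)
proof induction
  case (br A B) then show ?case using bracket_good assms(1) by blast
next
  case zero then show ?case unfolding good_def by simp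
next
  case (add X Y) then show ?case unfolding good_def by simp
next
  case (smult X c) then show ?case unfolding good_def by simp
qed

lemma series_good:
  assumes "\<And>X. X \<in> S \<Longrightarrow> good n 0 X"
  shows "X \<in> derived_series n S m \<Longrightarrow> good n m X"
proof (induction m arbitrary: X)
  case 0 then show ?case using assms unfolding derived_series_def by simp
next
  case (Suc m)
  have "X \<in> derived_step n (derived_series n S m)" using Suc.prems unfolding derived_series_def by simp
  then show ?case using derived_good Suc.IH by blast
qed

lemma good_n_zero:
  assumes "good n n X" shows "X = (\<lambda>i j. 0)"
proof (intro ext)
  fix i j
  show "X i j = 0"
  proof (cases "i \<in> {1..n} \<and> j \<in> {1..n}")
    case True then show ?thesis using assms unfolding good_def by auto
  next
    case False then show ?thesis using assms unfolding good_def by auto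
  qed
qed


theorem proposition3p5:
  fixes n d :: nat
  assumes alg_closed: "\<forall>p :: 'a::field_char_0 poly. degree p \<ge> 1 \<longrightarrow> (\<exists>x. poly p x = 0)"
    and "d \<ge> 3" and "n \<ge> 1"
  shows "(\<forall>L \<in> (Lnd n d :: 'a mat set). upper_triangular n L) \<and> solvable_lie n (Lnd n d :: 'a mat set)"
proof
  show ut: "\<forall>L \<in> (Lnd n d :: 'a mat set). upper_triangular n L"
    using lnd_upper assms(2,3) by blast
  have g0: "good n 0 X" if "X \<in> (Lnd n d :: 'a mat set)" for X
  proof -
    have "\<forall>i j. (i \<notin> {1..n} \<or> j \<notin> {1..n}) \<longrightarrow> X i j = 0" using that unfolding Lnd_def by blast
    moreover have "upper_triangular n X" using ut that by blast
    ultimately show ?thesis unfolding good_def upper_triangular_def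
      by (metis add_0_right atLeastAtMost_iff le_trans less_imp_le_nat not_le)
  qed
  have "derived_series n (Lnd n d :: 'a mat set) n \<subseteq> {\<lambda>i j. 0}"
    using series_good[OF g0] good_n_zero by blast
  then show "solvable_lie n (Lnd n d :: 'a mat set)" unfolding solvable_lie_def by blast
qed

end
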